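(* Let $a^{\mathrm o}_{\ell,m}$, $m=-\ell,\dots,\ell$, $\ell\ge0$, be the Fourier coefficients of a (realization of a) field $T^{\mathrm o}\in L_2(\mathbb{S}^2)$, i.e. $T^{\mathrm o}=\sum_{\ell\ge0}\sum_{m=-\ell}^{\ell}a^{\mathrm o}_{\ell,m}Y_{\ell,m}$. Let $(\beta_\ell)_{\ell\ge0}$ be a sequence of positive numbers and $\lambda>0$. Consider the problem \[ \min_{\mathbf a}\ \tfrac12\sum_{\ell=0}^\infty\sum_{m=-\ell}^{\ell}|a_{\ell,m}-a^{\mathrm o}_{\ell,m}|^2+\lambda\sum_{\ell=0}^\infty\beta_\ell\Big(\sum_{m=-\ell}^{\ell}|a_{\ell,m}|^2\Big)^{1/2} \] over complex sequences $\mathbf a=(a_{\ell,m})$. Write $A^{\mathrm o}_\ell:=\big(\sum_{m=-\ell}^{\ell}|a^{\mathrm o}_{\ell,m}|^2\big)^{1/2}$. Then the solution is the field $T^{\mathrm r}=\sum_{\ell=0}^\infty\sum_{m=-\ell}^{\ell}a^{\mathrm r}_{\ell,m}Y_{\ell,m}$ (in the $L_2(\Omega\times\mathbb{S}^2)$ sense when $T^{\mathrm o}$ is a random field) with, for $m=-\ell,\dots,\ell$, $\ell\ge0$, \[ a^{\mathrm r}_{\ell,m}=\begin{cases}\Big(1-\dfrac{\lambda\beta_\ell}{A^{\mathrm o}_\ell}\Big)a^{\mathrm o}_{\ell,m}, & A^{\mathrm o}_\ell>\lambda\beta_\ell,\\ 0, & A^{\mathrm o}_\ell\le\lambda\beta_\ell,\end{cases}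 \qquad A^{\mathrm r}_\ell:=\Big(\sum_{m=-\ell}^{\ell}|a^{\mathrm r}_{\ell,m}|^2\Big)^{1/2}=\begin{cases}\Big(1-\dfrac{\lambda\beta_\ell}{A^{\mathrm o}_\ell}\Big)A^{\mathrm o}_\ell, & A^{\mathrm o}_\ell>\lambda\beta_\ell,\\ 0, & A^{\mathrm o}_\ell\le\lambda\beta_\ell.\end{cases} \]
   Context: $\mathbb{S}^2$ is the unit sphere in $\mathbb{R}^3$ with surface measure $\sigma$, $\sigma(\mathbb{S}^2)=4\pi$; $\{Y_{\ell,m}\}$ is the standard complex orthonormal basis of spherical harmonics of $L_2(\mathbb{S}^2)$, and the Fourier coefficients are $a^{\mathrm o}_{\ell,m}=\int_{\mathbb{S}^2}T^{\mathrm o}\overline{Y_{\ell,m}}\,d\sigma$. When $T^{\mathrm o}$ is a random field on a probability space $(\Omega,\mathcal F,\mathbb P)$, the problem is solved realization-wise and $L_2(\Omega\times\mathbb{S}^2)$ is the $L_2$ space for the product measure $\mathbb P\otimes\sigma$. *)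

theory Defs
  imports "HOL-Analysis.Analysis"
begin

text \<open>Coefficient sequences a(l,m), l \<ge> 0, m = -l..l, are modelled as
  functions nat \<Rightarrow> int \<Rightarrow> complex; only the values with |m| \<le> l matter.\<close>

definition degree_idx :: "nat \<Rightarrow> int set" where
  "degree_idx l = {- int l .. int l}"

definition group_norm :: "(nat \<Rightarrow> int \<Rightarrow> complex) \<Rightarrow> nat \<Rightarrow> real" where
  "group_norm a l = sqrt (\<Sum>m\<in>degree_idx l. (cmod (a l m))\<^sup>2)"

definition objective ::
  "real \<Rightarrow> (nat \<Rightarrow> real) \<Rightarrow> (nat \<Rightarrow> int \<Rightarrow> complex) \<Rightarrow> (nat \<Rightarrow> int \<Rightarrow> complex) \<Rightarrow> ennreal" where
  "objective lam beta ao a =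
     (\<Sum>l. ennreal (1/2 * (\<Sum>m\<in>degree_idx l. (cmod (a l m - ao l m))\<^sup>2)))
     + (\<Sum>l. ennreal (lam * beta l * group_norm a l))"

definition shrink_coeffs ::
  "real \<Rightarrow> (nat \<Rightarrow> real) \<Rightarrow> (nat \<Rightarrow> int \<Rightarrow> complex) \<Rightarrow> nat \<Rightarrow> int \<Rightarrow> complex" where
  "shrink_coeffs lam beta ao l m =
     (if group_norm ao l > lam * beta l
      then complex_of_real (1 - lam * beta l / group_norm ao l) * ao l m
      else 0)"

end

theory Submission
  imports Defs
begin

lemma cs_sum:
  fixes a b :: "int \<Rightarrow> complex"
  shows "(\<Sum>m\<in>I. inner (a m) (b m)) \<le> sqrt (\<Sum>m\<in>I. (cmod (a m))\<^sup>2) * sqrt (\<Sum>m\<in>I. (cmod (b m))\<^sup>2)"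
proof -
  have "(\<Sum>m\<in>I. inner (a m) (b m)) \<le> (\<Sum>m\<in>I. \<bar>cmod (a m)\<bar> * \<bar>cmod (b m)\<bar>)"
    by (intro sum_mono) (simp add: norm_cauchy_schwarz)
  also have "\<dots> \<le> L2_set (\<lambda>m. cmod (a m)) I * L2_set (\<lambda>m. cmod (b m)) I"
    by (rule L2_set_mult_ineq)
  finally show ?thesis by (simp add: L2_set_def)
qed

lemma pt1: "(cmod (x - y))\<^sup>2 = (cmod (x - complex_of_real t * y))\<^sup>2 - 2*(1-t) * (x \<bullet> y)
   + 2*t*(1-t)*(cmod y)\<^sup>2 + (1-t)\<^sup>2 * (cmod y)\<^sup>2"
  unfolding cmod_power2 by (simp add: inner_complex_def power2_eq_square algebra_simps)

lemma pt0: "(cmod (x - y))\<^sup>2 = (cmod x)\<^sup>2 - 2 * inner x y + (cmod y)\<^sup>2"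
  unfolding cmod_power2 by (simp add: inner_complex_def power2_eq_square algebra_simps)

lemma group_lemma:
  fixes a ao :: "int \<Rightarrow> complex" and c :: real and I :: "int set"
  assumes fin: "finite I" and c: "c > 0"
  defines "N \<equiv> \<lambda>v. sqrt (\<Sum>m\<in>I. (cmod (v m))\<^sup>2)"
  defines "F \<equiv> \<lambda>v. 1/2 * (\<Sum>m\<in>I. (cmod (v m - ao m))\<^sup>2) + c * N v"
  defines "r \<equiv> \<lambda>m. if N ao > c then complex_of_real (1 - c / N ao) * ao m else 0"
  shows "F r + 1/2 * (\<Sum>m\<in>I. (cmod (a m - r m))\<^sup>2) \<le> F a"
proof -
  define A where "A = N ao"
  define P where "P = (\<Sum>m\<in>I. inner (a m) (ao m))"
  define S where "S = (\<Sum>m\<in>I. (cmod (ao m))\<^sup>2)"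
  define Sa where "Sa = (\<Sum>m\<in>I. (cmod (a m))\<^sup>2)"
  have S0: "S \<ge> 0" unfolding S_def by (intro sum_nonneg) auto
  have Sa0: "Sa \<ge> 0" unfolding Sa_def by (intro sum_nonneg) auto
  have AS: "A\<^sup>2 = S" unfolding A_def N_def S_def by (simp add: sum_nonneg)
  have A0: "A \<ge> 0" unfolding A_def N_def by (simp add: sum_nonneg)
  have NaSa: "(N a)\<^sup>2 = Sa" unfolding N_def Sa_def by (simp add: sum_nonneg)
  have Na0: "N a \<ge> 0" unfolding N_def by (simp add: sum_nonneg)
  have CS: "P \<le> N a * A" unfolding P_def A_def N_def by (rule cs_sum)
  show ?thesis
  proof (cases "A > c")
    case True
    define s where "s = 1 - c / A"
    have Apos: "A > 0" using True c by linarith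
    have s0: "s > 0" using True Apos by (simp add: s_def field_simps)
    have r: "r = (\<lambda>m. complex_of_real s * ao m)" unfolding r_def s_def A_def using True A_def by auto
    have sum1: "(\<Sum>m\<in>I. (cmod (a m - ao m))\<^sup>2) = (\<Sum>m\<in>I. (cmod (a m - r m))\<^sup>2) - 2*(1-s)*P
        + 2 * s * (1-s)*S + (1-s)\<^sup>2*S"
      unfolding r P_def S_def
      by (simp add: pt1[of "a _" "ao _" s] sum.distrib sum_subtractf sum_distrib_left)
    have sum2: "(\<Sum>m\<in>I. (cmod (r m - ao m))\<^sup>2) = (1-s)\<^sup>2*S"
      unfolding r S_def
    proof (simp add: sum_distrib_left, intro sum.cong refl)
      fix m
      have "complex_of_real s * ao m - ao m = complex_of_real (s - 1) * ao m" by (simp add: algebra_simps)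
      then show "(cmod (complex_of_real s * ao m - ao m))\<^sup>2 = (1 - s)\<^sup>2 * (cmod (ao m))\<^sup>2"
        by (simp only: norm_mult norm_of_real power_mult_distrib power2_abs power2_commute)
    qed
    have Nr: "N r = s * A"
    proof -
      have "(\<Sum>m\<in>I. (cmod (r m))\<^sup>2) = s\<^sup>2 * S" unfolding r S_def
        by (simp add: sum_distrib_left norm_mult power_mult_distrib)
      then show ?thesis unfolding N_def using s0 S0 AS
        by (simp add: real_sqrt_mult) (metis A0 real_sqrt_abs abs_of_nonneg)
    qed
    have Fr: "F r = 1/2*((1-s)\<^sup>2*S) + c * (s * A)" unfolding F_def using sum2 Nr by simp
    have Fa: "F a = 1/2*((\<Sum>m\<in>I. (cmod (a m - r m))\<^sup>2) - 2*(1-s)*P + 2 * s * (1-s)*S + (1-s)\<^sup>2*S) + c * N a"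
      unfolding F_def using sum1 by simp
    have cs: "1 - s = c / A" by (simp add: s_def)
    have key: "c * N a - (c/A) * P \<ge> 0"
    proof -
      have "(c/A) * P \<le> (c/A) * (N a * A)" using CS c Apos by (intro mult_left_mono) auto
      also have "\<dots> = c * N a" using Apos by simp
      finally show ?thesis by simp
    qed
    have e1: "s * (c/A) * A\<^sup>2 = c * (s * A)" using Apos by (simp add: power2_eq_square)
    have "F a - F r - 1/2 * (\<Sum>m\<in>I. (cmod (a m - r m))\<^sup>2) = c * N a - (c/A) * P"
      unfolding Fa Fr cs AS[symmetric] using e1 by (simp add: algebra_simps)
    then show ?thesis using key by linarith
  next
    case False
    have r: "r = (\<lambda>m. 0)" unfolding r_def using False A_def by auto
    have sum1: "(\<Sum>m\<in>I. (cmod (a m - ao m))\<^sup>2) = Sa - 2*P + S"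
      unfolding Sa_def P_def S_def
      by (simp add: pt0[of "a _" "ao _"] sum.distrib sum_subtractf sum_distrib_left)
    have Fr: "F r = 1/2 * S" unfolding F_def r N_def S_def by simp
    have Fa: "F a = 1/2 * (Sa - 2*P + S) + c * N a" unfolding F_def sum1 by simp
    have "N a * A \<le> N a * c" using False Na0 by (intro mult_left_mono) auto
    then have "P \<le> c * N a" using CS by (simp add: mult.commute)
    moreover have "(\<Sum>m\<in>I. (cmod (a m - r m))\<^sup>2) = Sa" unfolding r Sa_def by simp
    have E: "1/2*(Sa-2*P+S) + c*N a = 1/2*S + 1/2*Sa + (c*N a - P)" by (simp add: algebra_simps)
    have g: "1/2*S + 1/2*Sa \<le> 1/2*(Sa-2*P+S) + c*N a" unfolding E using \<open>P \<le> c * N a\<close> by linarith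
    show ?thesis unfolding Fa Fr using g \<open>(\<Sum>m\<in>I. (cmod (a m - r m))\<^sup>2) = Sa\<close> by simp
  qed
qed

definition G :: "real \<Rightarrow> (nat \<Rightarrow> real) \<Rightarrow> (nat \<Rightarrow> int \<Rightarrow> complex) \<Rightarrow> (nat \<Rightarrow> int \<Rightarrow> complex) \<Rightarrow> nat \<Rightarrow> real" where
  "G lam beta ao a l = 1/2 * (\<Sum>m\<in>degree_idx l. (cmod (a l m - ao l m))\<^sup>2) + lam * beta l * group_norm a l"

lemma fin_idx: "finite (degree_idx l)" by (simp add: degree_idx_def)

lemma grp:
  assumes "lam * beta l > 0"
  shows "G lam beta ao (shrink_coeffs lam beta ao) l
     + 1/2 * (\<Sum>m\<in>degree_idx l. (cmod (a l m - shrink_coeffs lam beta ao l m))\<^sup>2)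
     \<le> G lam beta ao a l"
  unfolding G_def group_norm_def shrink_coeffs_def
  by (rule group_lemma[where a="a l" and ao="ao l" and c="lam * beta l" and I="degree_idx l", OF fin_idx assms])

lemma G_nonneg: assumes "lam * beta l \<ge> 0" shows "G lam beta ao a l \<ge> 0"
proof -
  have "0 \<le> (\<Sum>m\<in>degree_idx l. (cmod (a l m - ao l m))\<^sup>2)" by (intro sum_nonneg) auto
  moreover have "0 \<le> group_norm a l" unfolding group_norm_def by (simp add: sum_nonneg)
  ultimately show ?thesis unfolding G_def using assms by simp
qed

lemma obj_eq:
  assumes "\<And>l. lam * beta l \<ge> 0"
  shows "objective lam beta ao a = (\<Sum>l. ennreal (G lam beta ao a l))"
proof -
  have "objective lam beta ao a = (\<Sum>l. ennreal (1/2 * (\<Sum>m\<in>degree_idx l. (cmod (a l m - ao l m))\<^sup>2))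
      + ennreal (lam * beta l * group_norm a l))"
    unfolding objective_def by (rule suminf_add) auto
  also have "\<dots> = (\<Sum>l. ennreal (G lam beta ao a l))"
    unfolding G_def
    by (intro suminf_cong ennreal_plus[symmetric] mult_nonneg_nonneg sum_nonneg assms)
       (auto simp: group_norm_def intro!: sum_nonneg)
  finally show ?thesis .
qed

theorem proposition3p1:
  fixes ao :: "nat \<Rightarrow> int \<Rightarrow> complex"
    and beta :: "nat \<Rightarrow> real"
    and lam :: real
  assumes L2: "summable (\<lambda>l. \<Sum>m\<in>degree_idx l. (cmod (ao l m))\<^sup>2)"
    and beta_pos: "\<And>l. beta l > 0"
    and lam_pos: "lam > 0"
  shows "(\<forall>a. objective lam beta ao (shrink_coeffs lam beta ao) \<le> objective lam beta ao a)
       \<and> (\<forall>a. objective lam beta ao a = objective lam beta ao (shrink_coeffs lam beta ao)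
              \<longrightarrow> (\<forall>l. \<forall>m\<in>degree_idx l. a l m = shrink_coeffs lam beta ao l m))
       \<and> objective lam beta ao (shrink_coeffs lam beta ao) < \<infinity>
       \<and> (\<forall>l. group_norm (shrink_coeffs lam beta ao) l =
              (if group_norm ao l > lam * beta l
               then (1 - lam * beta l / group_norm ao l) * group_norm ao l else 0))"
proof -
  have c: "\<And>l. lam * beta l > 0" using beta_pos lam_pos by simp
  have c0: "\<And>l. lam * beta l \<ge> 0" using c less_imp_le by blast
  define r where "r = shrink_coeffs lam beta ao"
  have Gn: "\<And>a l. G lam beta ao a l \<ge> 0" by (rule G_nonneg[OF c0])
  have sq0: "\<And>a l. (\<Sum>m\<in>degree_idx l. (cmod (a l m - r l m))\<^sup>2) \<ge> 0" by (intro sum_nonneg) auto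
  have le: "G lam beta ao r l \<le> G lam beta ao a l" for a l
    using grp[of lam beta l ao a, OF c[of l]] sq0[of a l] unfolding r_def by linarith
  have G0: "\<And>l. G lam beta ao (\<lambda>_ _. 0) l = 1/2 * (\<Sum>m\<in>degree_idx l. (cmod (ao l m))\<^sup>2)"
    by (simp add: G_def group_norm_def)
  have sumr: "summable (G lam beta ao r)"
  proof (rule summable_comparison_test[of _ "\<lambda>l. 1/2 * (\<Sum>m\<in>degree_idx l. (cmod (ao l m))\<^sup>2)"])
    show "\<exists>N. \<forall>n\<ge>N. norm (G lam beta ao r n) \<le> 1/2 * (\<Sum>m\<in>degree_idx n. (cmod (ao n m))\<^sup>2)"
      using le[of _ "\<lambda>_ _. 0"] Gn G0 by auto
    show "summable (\<lambda>l. 1/2 * (\<Sum>m\<in>degree_idx l. (cmod (ao l m))\<^sup>2))"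
      using L2 by (rule summable_mult)
  qed
  have objr: "objective lam beta ao r = ennreal (\<Sum>l. G lam beta ao r l)"
    unfolding obj_eq[OF c0] using Gn sumr by (rule suminf_ennreal2)
  have P1: "\<forall>a. objective lam beta ao r \<le> objective lam beta ao a"
  proof
    fix a
    show "objective lam beta ao r \<le> objective lam beta ao a"
      unfolding obj_eq[OF c0] using le by (intro suminf_le ennreal_leI) (auto intro: summableI)
  qed
  have P3: "objective lam beta ao r < \<infinity>" unfolding objr by simp
  have P2: "\<forall>a. objective lam beta ao a = objective lam beta ao r
              \<longrightarrow> (\<forall>l. \<forall>m\<in>degree_idx l. a l m = r l m)"
  proof (intro allI impI ballI)
    fix a l m
    assume eq: "objective lam beta ao a = objective lam beta ao r" and m: "m \<in> degree_idx l"
    have "(\<Sum>l. ennreal (G lam beta ao a l)) \<noteq> top"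
      using eq P3 unfolding obj_eq[OF c0] by auto
    then have suma: "summable (G lam beta ao a)" by (rule summable_suminf_not_top[OF Gn])
    have "ennreal (\<Sum>l. G lam beta ao a l) = ennreal (\<Sum>l. G lam beta ao r l)"
    proof -
      have "ennreal (\<Sum>l. G lam beta ao a l) = objective lam beta ao a"
        using obj_eq[OF c0, where ao=ao and a=a] suminf_ennreal2[OF Gn suma] by simp
      then show ?thesis using eq objr by simp
    qed
    then have "(\<Sum>l. G lam beta ao a l) = (\<Sum>l. G lam beta ao r l)"
      by (simp add: suminf_nonneg[OF suma Gn] suminf_nonneg[OF sumr Gn])
    then have "(\<Sum>l. G lam beta ao a l - G lam beta ao r l) = 0"
      using suminf_diff[OF suma sumr] by simp
    then have "\<forall>l. G lam beta ao a l - G lam beta ao r l = 0"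
      using suminf_eq_zero_iff[OF summable_diff[OF suma sumr]] le by auto
    then have "G lam beta ao a l = G lam beta ao r l" by simp
    then have "(\<Sum>m\<in>degree_idx l. (cmod (a l m - r l m))\<^sup>2) = 0"
      using grp[of lam beta l ao a, OF c[of l]] sq0[of a l] unfolding r_def by simp
    then have "(cmod (a l m - r l m))\<^sup>2 = 0"
      using sum_nonneg_eq_0_iff[OF fin_idx, of l "\<lambda>m. (cmod (a l m - r l m))\<^sup>2"] m by simp
    then show "a l m = r l m" by simp
  qed
  have P4: "\<forall>l. group_norm (shrink_coeffs lam beta ao) l =
              (if group_norm ao l > lam * beta l
               then (1 - lam * beta l / group_norm ao l) * group_norm ao l else 0)"
  proof
    fix l
    show "group_norm (shrink_coeffs lam beta ao) l =
              (if group_norm ao l > lam * beta l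
               then (1 - lam * beta l / group_norm ao l) * group_norm ao l else 0)"
    proof (cases "group_norm ao l > lam * beta l")
      case True
      define s where "s = 1 - lam * beta l / group_norm ao l"
      have gp: "group_norm ao l > 0" using True c[of l] by linarith
      have s0: "s \<ge> 0" using True gp by (simp add: s_def field_simps)
      have "group_norm (shrink_coeffs lam beta ao) l = sqrt (s\<^sup>2 * (\<Sum>m\<in>degree_idx l. (cmod (ao l m))\<^sup>2))"
      proof -
        have sh: "shrink_coeffs lam beta ao l m = complex_of_real s * ao l m" for m
          using True by (simp add: shrink_coeffs_def s_def)
        show ?thesis unfolding group_norm_def sh
          by (simp add: norm_mult power_mult_distrib sum_distrib_left)
      qed
      also have "\<dots> = s * group_norm ao l"
        unfolding group_norm_def using s0 by (simp add: real_sqrt_mult)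
      finally show ?thesis using True by (simp add: s_def)
    next
      case False
      then show ?thesis by (simp add: group_norm_def shrink_coeffs_def)
    qed
  qed
  show ?thesis using P1 P2 P3 P4 unfolding r_def by blast
qed

end
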